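(* Let $\varepsilon>0$, $k\in\mathbb N$ with $k\ge1$, and $0<r_{\max}<\infty$. Then the mechanism $r\mapsto\mathrm{ScalarDP}(r,\varepsilon;k,r_{\max})$ (on inputs $r\ge0$) is $\varepsilon$-locally differentially private, and for $Z=\mathrm{ScalarDP}(r,\varepsilon;k,r_{\max})$ with $0\le r\le r_{\max}$ we have $\mathbb E[Z]=r$ and \[ \mathbb E[(Z-r)^2]\le \frac{k+1}{e^\varepsilon-1}\Big[r^2+\frac{r_{\max}^2}{4k^2}+\frac{(2k+1)(e^\varepsilon+k)\,r_{\max}^2}{6k(e^\varepsilon-1)}\Big]+\frac{r_{\max}^2}{4k^2}. \]
   Context: $\mathrm{ScalarDP}(r,\varepsilon;k,r_{\max})$: set $r\leftarrow\min\{r,r_{\max}\}$ and $x=kr/r_{\max}$. Sample $J=\lfloor x\rfloor$ with probability $\lceil x\rceil-x$ and $J=\lceil x\rceil$ otherwise (so $J\in\{0,\dots,k\}$). Randomized response: given $J=i$, set $\widehat J=i$ with probability $\frac{e^\varepsilon}{e^\varepsilon+k}$ and otherwise $\widehat J$ uniform on $\{0,\dots,k\}\setminus\{i\}$. Output $Z=a(\widehat J-b)$ with $a=\frac{e^\varepsilon+k}{e^\varepsilon-1}\cdot\frac{r_{\max}}k$ and $b=\frac{k(k+1)}{2(e^\varepsilon+k)}$. A mechanism $M$ is $\varepsilon$-locally differentially private if $\mathbb P(M(r)\in S)\le e^{\varepsilon}\mathbb P(M(r')\in S)$ for all inputs $r,r'$ and sets $S$. *)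

theory Defs
  imports "HOL-Probability.Probability"
begin

definition sr_level :: "nat \<Rightarrow> real \<Rightarrow> real \<Rightarrow> nat pmf" where
  "sr_level k rmax r =
     (let x = real k * min r rmax / rmax in
      map_pmf (\<lambda>b. if b then nat \<lfloor>x\<rfloor> else nat \<lceil>x\<rceil>)
              (bernoulli_pmf (real_of_int \<lceil>x\<rceil> - x)))"

definition rand_resp :: "real \<Rightarrow> nat \<Rightarrow> nat \<Rightarrow> nat pmf" where
  "rand_resp \<epsilon> k i =
     bind_pmf (bernoulli_pmf (exp \<epsilon> / (exp \<epsilon> + real k)))
       (\<lambda>keep. if keep then return_pmf i else pmf_of_set ({0..k} - {i}))"

definition sdp_a :: "real \<Rightarrow> nat \<Rightarrow> real \<Rightarrow> real" where
  "sdp_a \<epsilon> k rmax = (exp \<epsilon> + real k) / (exp \<epsilon> - 1) * (rmax / real k)"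

definition sdp_b :: "real \<Rightarrow> nat \<Rightarrow> real" where
  "sdp_b \<epsilon> k = real k * (real k + 1) / (2 * (exp \<epsilon> + real k))"

definition ScalarDP :: "real \<Rightarrow> real \<Rightarrow> nat \<Rightarrow> real \<Rightarrow> real pmf" where
  "ScalarDP r \<epsilon> k rmax =
     map_pmf (\<lambda>j. sdp_a \<epsilon> k rmax * (real j - sdp_b \<epsilon> k))
       (bind_pmf (sr_level k rmax r) (rand_resp \<epsilon> k))"

definition eps_LDP :: "real \<Rightarrow> 'a set \<Rightarrow> ('a \<Rightarrow> 'b pmf) \<Rightarrow> bool" where
  "eps_LDP \<epsilon> D M \<longleftrightarrow>
     (\<forall>r\<in>D. \<forall>r'\<in>D. \<forall>S. measure_pmf.prob (M r) S \<le> exp \<epsilon> * measure_pmf.prob (M r') S)"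

end

theory Submission imports Defs begin

lemma sr_set:
  assumes "r \<ge> 0" "rmax > 0"
  shows "set_pmf (sr_level k rmax r) \<subseteq> {0..k}"
proof -
  define x where "x = real k * min r rmax / rmax"
  have x0: "x \<ge> 0" using assms unfolding x_def by auto
  have xk: "x \<le> real k" using assms unfolding x_def
    by (simp add: divide_le_eq mult_left_mono)
  have "\<lceil>x\<rceil> \<le> int k" using xk by (simp add: ceiling_le_iff)
  moreover have "\<lfloor>x\<rfloor> \<le> int k" using xk by (meson floor_le_ceiling order_trans \<open>\<lceil>x\<rceil> \<le> int k\<close>)
  ultimately show ?thesis using xk x0 unfolding sr_level_def Let_def x_def[symmetric]
    by auto
qed

lemma sr_exp:
  fixes k :: nat and r rmax :: real
  assumes "r \<ge> 0" "rmax > 0"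
  defines "x \<equiv> real k * min r rmax / rmax"
  shows "measure_pmf.expectation (sr_level k rmax r) h
     = (real_of_int \<lceil>x\<rceil> - x) * h (nat \<lfloor>x\<rfloor>) + (1 - (real_of_int \<lceil>x\<rceil> - x)) * h (nat \<lceil>x\<rceil>)"
proof -
  have "real_of_int \<lceil>x\<rceil> - x \<ge> 0" by linarith
  moreover have "real_of_int \<lceil>x\<rceil> - x \<le> 1" by linarith
  ultimately show ?thesis unfolding sr_level_def Let_def x_def[symmetric]
    by (simp add: mult.commute)
qed

lemma rr_pmf:
  assumes "i \<le> k" "k \<ge> 1" "\<epsilon> > 0"
  shows "pmf (rand_resp \<epsilon> k i) j =
    (if j \<le> k then (if j = i then exp \<epsilon> / (exp \<epsilon> + real k) else 1 / (exp \<epsilon> + real k)) else 0)" (is "_ = ?rhs")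
proof -
  have c: "exp \<epsilon> + real k > 0" by (simp add: add_pos_nonneg)
  have p0: "exp \<epsilon> / (exp \<epsilon> + real k) \<ge> 0" using c by simp
  have p1: "exp \<epsilon> / (exp \<epsilon> + real k) \<le> 1" using c by simp
  have ne: "{0..k} - {i} \<noteq> {}" using assms by (metis Diff_iff atLeastAtMost_iff le0 le_antisym less_one not_le empty_iff singletonD)
  have kp: "real k > 0" using assms by simp
  have q: "(1 - exp \<epsilon> / (exp \<epsilon> + real k)) / real k = 1 / (exp \<epsilon> + real k)"
  proof -
    have "1 - exp \<epsilon> / (exp \<epsilon> + real k) = real k / (exp \<epsilon> + real k)" using c by (simp add: field_simps)
    then show ?thesis using kp by simp
  qed
  have q2: "(1 - exp \<epsilon> / (exp \<epsilon> + real k)) * (1 / real k) = 1 / (exp \<epsilon> + real k)"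
    using q by simp
  have card: "card ({0..k} - {i}) = k" using assms by simp
  have "pmf (rand_resp \<epsilon> k i) j = exp \<epsilon> / (exp \<epsilon> + real k) * indicator {j} i
     + (1 - exp \<epsilon> / (exp \<epsilon> + real k)) * (indicator ({0..k} - {i}) j / real k)"
    unfolding rand_resp_def pmf_bind using p0 p1 ne card
    by (simp add: mult.commute)
  also have "\<dots> = ?rhs"
    using assms q by (auto simp: indicator_def)
  finally show ?thesis .
qed
lemma Q_pmf:
  fixes k :: nat and r rmax \<epsilon> :: real
  assumes "r \<ge> 0" "rmax > 0" "k \<ge> 1" "\<epsilon> > 0"
  shows "pmf (bind_pmf (sr_level k rmax r) (rand_resp \<epsilon> k)) j =
    (if j \<le> k then (exp \<epsilon> - 1) / (exp \<epsilon> + real k) * pmf (sr_level k rmax r) j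
        + 1 / (exp \<epsilon> + real k) else 0)"
proof -
  let ?J = "sr_level k rmax r"
  let ?c = "exp \<epsilon> + real k"
  have S: "set_pmf ?J \<subseteq> {0..k}" using sr_set assms by blast
  have "pmf (bind_pmf ?J (rand_resp \<epsilon> k)) j = (\<Sum>i\<in>{0..k}. pmf (rand_resp \<epsilon> k i) j * pmf ?J i)"
    unfolding pmf_bind using S by (intro integral_measure_pmf_real) auto
  also have "\<dots> = (\<Sum>i\<in>{0..k}. (if j \<le> k then (if j = i then exp \<epsilon> / ?c else 1 / ?c) else 0) * pmf ?J i)"
    using assms by (intro sum.cong refl) (simp add: rr_pmf)
  also have "\<dots> = (if j \<le> k then (exp \<epsilon> - 1) / ?c * pmf ?J j + 1 / ?c else 0)"
  proof (cases "j \<le> k")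
    case True
    have "(\<Sum>i\<in>{0..k}. (if j = i then exp \<epsilon> / ?c else 1 / ?c) * pmf ?J i)
        = (\<Sum>i\<in>{0..k}. 1 / ?c * pmf ?J i + (if j = i then (exp \<epsilon> - 1) / ?c * pmf ?J i else 0))"
      by (intro sum.cong refl) (auto simp: diff_divide_distrib algebra_simps)
    also have "\<dots> = 1 / ?c * (\<Sum>i\<in>{0..k}. pmf ?J i) + (exp \<epsilon> - 1) / ?c * pmf ?J j"
      using True by (simp add: sum.distrib sum_distrib_left)
    also have "(\<Sum>i\<in>{0..k}. pmf ?J i) = 1" using S by (intro sum_pmf_eq_1) auto
    finally show ?thesis using True by simp
  qed simp
  finally show ?thesis .
qed

lemma sum1: "(\<Sum>j\<in>{0..k}. real j) = real k * (real k + 1) / 2"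
  by (induction k) (auto simp: field_simps)

lemma sum2: "(\<Sum>j\<in>{0..k}. (real j)^2) = real k * (real k + 1) * (2 * real k + 1) / 6"
  by (induction k) (auto simp: field_simps power2_eq_square)

lemma sumq: "(\<Sum>j\<in>{0..k}. \<alpha> + \<beta> * real j + \<gamma> * (real j)^2)
   = \<alpha> * (real k + 1) + \<beta> * (real k * (real k + 1) / 2) + \<gamma> * (real k * (real k + 1) * (2 * real k + 1) / 6)"
  by (simp add: sum.distrib sum_distrib_left[symmetric] sum1 sum2 mult.commute)

lemma Q_exp:
  fixes k :: nat and r rmax \<epsilon> :: real
  assumes "r \<ge> 0" "rmax > 0" "k \<ge> 1" "\<epsilon> > 0"
  shows "measure_pmf.expectation (bind_pmf (sr_level k rmax r) (rand_resp \<epsilon> k)) h =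
    (exp \<epsilon> - 1) / (exp \<epsilon> + real k) * measure_pmf.expectation (sr_level k rmax r) h
        + 1 / (exp \<epsilon> + real k) * (\<Sum>j\<in>{0..k}. h j)"
proof -
  let ?J = "sr_level k rmax r"
  let ?Q = "bind_pmf (sr_level k rmax r) (rand_resp \<epsilon> k)"
  let ?c = "exp \<epsilon> + real k"
  have S: "set_pmf ?J \<subseteq> {0..k}" using sr_set assms by blast
  have SQ: "a \<in> {0..k}" if "a \<in> set_pmf ?Q" for a
  proof (rule ccontr)
    assume "a \<notin> {0..k}"
    then have "pmf ?Q a = 0" using Q_pmf[OF assms] by simp
    then show False using that by (simp add: set_pmf_eq)
  qed
  have "measure_pmf.expectation ?Q h = (\<Sum>j\<in>{0..k}. h j * pmf ?Q j)"
    using SQ by (intro integral_measure_pmf_real) auto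
  also have "\<dots> = (\<Sum>j\<in>{0..k}. (exp \<epsilon> - 1) / ?c * (h j * pmf ?J j) + 1 / ?c * h j)"
    using Q_pmf[OF assms] by (intro sum.cong refl) (auto simp: algebra_simps)
  also have "\<dots> = (exp \<epsilon> - 1) / ?c * (\<Sum>j\<in>{0..k}. h j * pmf ?J j) + 1 / ?c * (\<Sum>j\<in>{0..k}. h j)"
    by (simp add: sum.distrib sum_distrib_left)
  also have "(\<Sum>j\<in>{0..k}. h j * pmf ?J j) = measure_pmf.expectation ?J h"
    using S by (intro integral_measure_pmf_real[symmetric]) auto
  finally show ?thesis .
qed

lemma J_mom:
  fixes k :: nat and r rmax :: real
  assumes "r \<ge> 0" "r \<le> rmax" "rmax > 0"
  obtains m2 where "m2 \<le> (real k * r / rmax)^2 + 1/4"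
    "\<And>\<alpha> \<beta> \<gamma>. measure_pmf.expectation (sr_level k rmax r) (\<lambda>j. \<alpha> + \<beta> * real j + \<gamma> * (real j)^2)
       = \<alpha> + \<beta> * (real k * r / rmax) + \<gamma> * m2"
proof -
  define x where "x = real k * r / rmax"
  have xd: "x = real k * min r rmax / rmax" using assms unfolding x_def by simp
  have x0: "x \<ge> 0" using assms unfolding x_def by auto
  define \<theta> where "\<theta> = real_of_int \<lceil>x\<rceil> - x"
  define f where "f = real_of_int \<lfloor>x\<rfloor>"
  have f0: "real (nat \<lfloor>x\<rfloor>) = f" using x0 unfolding f_def by simp
  have c0: "real (nat \<lceil>x\<rceil>) = real_of_int \<lceil>x\<rceil>" using x0 by simp
  define m2 where "m2 = \<theta> * f^2 + (1 - \<theta>) * (real_of_int \<lceil>x\<rceil>)^2"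
  have E: "measure_pmf.expectation (sr_level k rmax r) (\<lambda>j. \<alpha> + \<beta> * real j + \<gamma> * (real j)^2)
       = \<alpha> + \<beta> * x + \<gamma> * m2" for \<alpha> \<beta> \<gamma>
  proof (cases "x = f")
    case True
    then have ce: "real_of_int \<lceil>x\<rceil> = x" unfolding f_def by (metis ceiling_of_int of_int_floor)
    show ?thesis unfolding sr_exp[OF assms(1,3), of k, folded xd] m2_def \<theta>_def f0 c0 ce using True
      by (simp add: algebra_simps)
  next
    case False
    then have "real_of_int \<lceil>x\<rceil> = f + 1" unfolding f_def by (simp add: ceiling_altdef)
    then show ?thesis unfolding sr_exp[OF assms(1,3), of k, folded xd] m2_def \<theta>_def f0 c0
      by (simp add: algebra_simps)
  qed
  have "m2 \<le> x^2 + 1/4"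
  proof (cases "x = f")
    case True
    then have ce: "real_of_int \<lceil>x\<rceil> = x" unfolding f_def by (metis ceiling_of_int of_int_floor)
    show ?thesis unfolding m2_def \<theta>_def ce using True by simp
  next
    case False
    then have ce: "real_of_int \<lceil>x\<rceil> = f + 1" unfolding f_def by (simp add: ceiling_altdef)
    define s where "s = x - f"
    have "m2 = x^2 + s - s^2" unfolding m2_def \<theta>_def ce s_def by (simp add: algebra_simps power2_eq_square)
    moreover have "s - s^2 \<le> 1/4" using sum_squares_ge_zero[of "s - 1/2" 0]
      by (simp add: power2_eq_square algebra_simps)
    ultimately show ?thesis by simp
  qed
  then show ?thesis using that E unfolding x_def by blast
qed

lemma Q_set:
  fixes k :: nat and r rmax \<epsilon> :: real
  assumes "r \<ge> 0" "rmax > 0" "k \<ge> 1" "\<epsilon> > 0"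
  shows "set_pmf (bind_pmf (sr_level k rmax r) (rand_resp \<epsilon> k)) \<subseteq> {0..k}"
proof
  fix a assume a: "a \<in> set_pmf (bind_pmf (sr_level k rmax r) (rand_resp \<epsilon> k))"
  show "a \<in> {0..k}"
  proof (rule ccontr)
    assume "a \<notin> {0..k}"
    then have "pmf (bind_pmf (sr_level k rmax r) (rand_resp \<epsilon> k)) a = 0" using Q_pmf[OF assms] by simp
    then show False using a by (simp add: set_pmf_eq)
  qed
qed

lemma Q_prob:
  fixes k :: nat and r rmax \<epsilon> :: real
  assumes "r \<ge> 0" "rmax > 0" "k \<ge> 1" "\<epsilon> > 0"
  shows "measure_pmf.prob (bind_pmf (sr_level k rmax r) (rand_resp \<epsilon> k)) A
      = (\<Sum>j\<in>{0..k}. indicator A j * pmf (bind_pmf (sr_level k rmax r) (rand_resp \<epsilon> k)) j)"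
proof -
  have "measure_pmf.prob (bind_pmf (sr_level k rmax r) (rand_resp \<epsilon> k)) A
    = measure_pmf.expectation (bind_pmf (sr_level k rmax r) (rand_resp \<epsilon> k)) (indicator A)"
    by simp
  then show ?thesis
    using Q_set[OF assms] by (subst integral_measure_pmf_real[symmetric]) auto
qed

lemma var_id:
  fixes a b c d u r x m2 S1 S2 K :: real
  assumes "d > 0" "u > 0" "c > 0" "a = c * u / d" "b = S1 / c" "x = r / u" "c = d + K + 1"
  shows "d / c * ((a * b + r)^2 + (- 2 * a * (a * b + r)) * x + a^2 * m2)
       + 1 / c * ((a * b + r)^2 * (K + 1) + (- 2 * a * (a * b + r)) * S1 + a^2 * S2)
     = (K + 1) * r^2 / d + u^2 * c * (m2 - x^2) / d - 2 * S1 * u * r / d + u^2 * (c * S2 - S1^2) / d^2"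
proof -
  have ab: "a * b = u * S1 / d" unfolding assms(4,5) using assms(1-3) by (simp add: field_simps)
  have ax: "a * x = c * r / d" unfolding assms(4,6) using assms(1-3) by (simp add: field_simps)
  have K1: "K + 1 = c - d" using assms by simp
  have "d / c * ((a * b + r)^2 + (- 2 * a * (a * b + r)) * x + a^2 * m2)
       + 1 / c * ((a * b + r)^2 * (K + 1) + (- 2 * a * (a * b + r)) * S1 + a^2 * S2)
     = (a*b+r)^2 - 2 * (a*x) * (a*b+r) * d / c + a^2 * m2 * d / c - 2 * a * (a*b+r) * S1 / c + a^2 * S2 / c"
    unfolding K1 using assms(3) by (simp add: field_simps power2_eq_square)
  also have "\<dots> = (u * S1 / d + r)^2 - 2 * r * (u * S1 / d + r) + c * u^2 * m2 / d - 2 * u * (u * S1 / d + r) * S1 / d + c * u^2 * S2 / d^2"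
    unfolding ab ax unfolding assms(4) using assms(1-3) by (simp add: field_simps power2_eq_square)
  also have "\<dots> = (c - d) * r^2 / d + u^2 * c * (m2 - (r/u)^2) / d - 2 * S1 * u * r / d + u^2 * (c * S2 - S1^2) / d^2"
    using assms(1-3) by (simp add: field_simps power2_eq_square)
  finally show ?thesis unfolding K1 assms(6) .
qed
lemma mean_id:
  fixes a b c d u r x S1 K :: real
  assumes "d > 0" "u > 0" "c > 0" "a = c * u / d" "b = S1 / c" "x = r / u" "c = d + K + 1"
  shows "d / c * (- a * b + a * x + 0 * m2) + 1 / c * (- a * b * (K + 1) + a * S1 + 0 * S2) = r"
proof -
  have ab: "a * b = u * S1 / d" unfolding assms(4,5) using assms(1-3) by (simp add: field_simps)
  have ax: "a * x = c * r / d" unfolding assms(4,6) using assms(1-3) by (simp add: field_simps)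
  have K1: "K + 1 = c - d" using assms by simp
  have "d / c * (- a * b + a * x + 0 * m2) + 1 / c * (- a * b * (K + 1) + a * S1 + 0 * S2)
     = d / c * (- (a * b) + a * x) + 1 / c * (- (a * b) * (c - d) + a * S1)" unfolding K1 by simp
  also have "\<dots> = r" unfolding ab ax unfolding assms(4) using assms(1-3) by (simp add: field_simps)
  finally show ?thesis .
qed

lemma rhs_id:
  fixes c d u r R K S2 :: real
  assumes "d > 0" "K > 0" "u = R / K" "S2 = K * (K + 1) * (2 * K + 1) / 6" "c = d + K + 1"
  shows "(K + 1) * r^2 / d + u^2 * c * (1/4) / d - 0 + u^2 * (c * S2) / d^2
     = (K + 1) / d * (r^2 + R^2 / (4 * K^2) + (2 * K + 1) * c * R^2 / (6 * K * d)) + R^2 / (4 * K^2)"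
proof -
  have "u^2 * c * (1/4) / d = (K+1) / d * (R^2 / (4 * K^2)) + R^2 / (4 * K^2)"
    unfolding assms(3,5) using assms(1,2) by (simp add: field_simps power2_eq_square)
  moreover have "u^2 * (c * S2) / d^2 = (K + 1) / d * ((2 * K + 1) * c * R^2 / (6 * K * d))"
    unfolding assms(3,4) using assms(1,2) by (simp add: field_simps power2_eq_square)
  ultimately show ?thesis by (simp add: algebra_simps add_divide_distrib)
qed

theorem lemma4p9:
  fixes \<epsilon> rmax :: real and k :: nat
  assumes "\<epsilon> > 0" and "k \<ge> 1" and "rmax > 0"
  shows "eps_LDP \<epsilon> {r. r \<ge> 0} (\<lambda>r. ScalarDP r \<epsilon> k rmax)
    \<and> (\<forall>r. 0 \<le> r \<and> r \<le> rmax \<longrightarrow>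
         measure_pmf.expectation (ScalarDP r \<epsilon> k rmax) (\<lambda>z. z) = r
       \<and> measure_pmf.expectation (ScalarDP r \<epsilon> k rmax) (\<lambda>z. (z - r)^2)
           \<le> (real k + 1) / (exp \<epsilon> - 1) *
               (r^2 + rmax^2 / (4 * real k^2)
                + (2 * real k + 1) * (exp \<epsilon> + real k) * rmax^2
                  / (6 * real k * (exp \<epsilon> - 1)))
             + rmax^2 / (4 * real k^2))"
proof (intro conjI allI impI)
  define e where "e = exp \<epsilon>"
  define c where "c = e + real k"
  define d where "d = e - 1"
  have e1: "e > 1" unfolding e_def using assms by simp
  have d0: "d > 0" unfolding d_def using e1 by simp
  have c0: "c > 0" unfolding c_def using e1 by simp
  have k0: "real k > 0" using assms by simp
  let ?Q = "\<lambda>r. bind_pmf (sr_level k rmax r) (rand_resp \<epsilon> k)"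
  show "eps_LDP \<epsilon> {r. r \<ge> 0} (\<lambda>r. ScalarDP r \<epsilon> k rmax)"
    unfolding eps_LDP_def
  proof (intro ballI allI)
    fix r r' :: real and S :: "real set" assume r: "r \<in> {r. r \<ge> 0}" and r': "r' \<in> {r. r \<ge> 0}"
    define g where "g = (\<lambda>j. sdp_a \<epsilon> k rmax * (real j - sdp_b \<epsilon> k))"
    have "measure_pmf.prob (ScalarDP r \<epsilon> k rmax) S = measure_pmf.prob (?Q r) (g -` S)"
      unfolding ScalarDP_def g_def by simp
    also have "\<dots> = (\<Sum>j\<in>{0..k}. indicator (g -` S) j * pmf (?Q r) j)"
      using r assms by (intro Q_prob) auto
    also have "\<dots> \<le> (\<Sum>j\<in>{0..k}. exp \<epsilon> * (indicator (g -` S) j * pmf (?Q r') j))"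
    proof (intro sum_mono)
      fix j assume j: "j \<in> {0..k}"
      have p1: "pmf (?Q r) j \<le> e / c"
      proof -
        have "pmf (?Q r) j = d / c * pmf (sr_level k rmax r) j + 1 / c"
          using Q_pmf[of r rmax k \<epsilon> j] r assms j unfolding c_def d_def e_def by auto
        also have "\<dots> \<le> d / c * 1 + 1 / c"
          using d0 c0 by (intro add_right_mono mult_left_mono) (auto simp: pmf_le_1)
        also have "\<dots> = e / c" unfolding d_def using c0 by (simp add: field_simps)
        finally show ?thesis .
      qed
      have p2: "pmf (?Q r') j \<ge> 1 / c"
      proof -
        have "pmf (?Q r') j = d / c * pmf (sr_level k rmax r') j + 1 / c"
          using Q_pmf[of r' rmax k \<epsilon> j] r' assms j unfolding c_def d_def e_def by auto
        moreover have "d / c * pmf (sr_level k rmax r') j \<ge> 0" using d0 c0 by simp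
        ultimately show ?thesis by simp
      qed
      have "pmf (?Q r) j \<le> exp \<epsilon> * pmf (?Q r') j"
      proof -
        have "e / c = e * (1 / c)" by simp
        also have "\<dots> \<le> e * pmf (?Q r') j" using p2 e1 by (intro mult_left_mono) auto
        finally show ?thesis using p1 unfolding e_def by simp
      qed
      then show "indicator (g -` S) j * pmf (?Q r) j \<le> exp \<epsilon> * (indicator (g -` S) j * pmf (?Q r') j)"
        by (auto simp: indicator_def)
    qed
    also have "\<dots> = exp \<epsilon> * measure_pmf.prob (?Q r') (g -` S)"
      using r' by (simp only: Q_prob[of r' rmax k \<epsilon> "g -` S", OF _ assms(3) assms(2) assms(1)] sum_distrib_left mem_Collect_eq)
    also have "\<dots> = exp \<epsilon> * measure_pmf.prob (ScalarDP r' \<epsilon> k rmax) S"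
      unfolding ScalarDP_def g_def by simp
    finally show "measure_pmf.prob (ScalarDP r \<epsilon> k rmax) S \<le> exp \<epsilon> * measure_pmf.prob (ScalarDP r' \<epsilon> k rmax) S" .
  qed
  fix r :: real assume r: "0 \<le> r \<and> r \<le> rmax"
  obtain m2 where m2: "m2 \<le> (real k * r / rmax)^2 + 1/4"
    and E: "\<And>\<alpha> \<beta> \<gamma>. measure_pmf.expectation (sr_level k rmax r) (\<lambda>j. \<alpha> + \<beta> * real j + \<gamma> * (real j)^2)
       = \<alpha> + \<beta> * (real k * r / rmax) + \<gamma> * m2"
    using J_mom[of r rmax k] r assms by auto
  have EQ: "measure_pmf.expectation (?Q r) (\<lambda>j. \<alpha> + \<beta> * real j + \<gamma> * (real j)^2)
     = d / c * (\<alpha> + \<beta> * (real k * r / rmax) + \<gamma> * m2)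
       + 1 / c * (\<alpha> * (real k + 1) + \<beta> * (real k * (real k + 1) / 2) + \<gamma> * (real k * (real k + 1) * (2 * real k + 1) / 6))"
    for \<alpha> \<beta> \<gamma>
    using r by (simp only: Q_exp[OF _ assms(3) assms(2) assms(1)] E sumq c_def d_def e_def)
  define a where "a = sdp_a \<epsilon> k rmax"
  define b where "b = sdp_b \<epsilon> k"
  have a_def': "a = c / d * (rmax / real k)" unfolding a_def sdp_a_def c_def d_def e_def ..
  have b_def': "b = real k * (real k + 1) / (2 * c)" unfolding b_def sdp_b_def c_def e_def ..
  have "measure_pmf.expectation (ScalarDP r \<epsilon> k rmax) (\<lambda>z. z)
      = measure_pmf.expectation (?Q r) (\<lambda>j. (- a * b) + a * real j + 0 * (real j)^2)"
    unfolding ScalarDP_def a_def b_def by (simp add: algebra_simps)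
  also have "\<dots> = r"
    unfolding EQ
    apply (rule mean_id[where u="rmax / real k" and K="real k"])
    using d0 c0 k0 assms unfolding a_def' b_def' c_def d_def by auto
  finally show "measure_pmf.expectation (ScalarDP r \<epsilon> k rmax) (\<lambda>z. z) = r" .
  define u where "u = rmax / real k"
  define S1 where "S1 = real k * (real k + 1) / 2"
  define S2 where "S2 = real k * (real k + 1) * (2 * real k + 1) / 6"
  define v where "v = m2 - (real k * r / rmax)^2"
  have cd: "c = d + real k + 1" unfolding c_def d_def by simp
  have v4: "v \<le> 1/4" using m2 unfolding v_def by simp
  have u0: "u > 0" unfolding u_def using assms k0 by simp
  have S10: "S1 \<ge> 0" unfolding S1_def by simp
  have "measure_pmf.expectation (ScalarDP r \<epsilon> k rmax) (\<lambda>z. (z - r)^2)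
      = measure_pmf.expectation (?Q r) (\<lambda>j. (a * b + r)^2 + (- 2 * a * (a * b + r)) * real j + a^2 * (real j)^2)"
    unfolding ScalarDP_def a_def b_def by (simp add: algebra_simps power2_eq_square)
  also have "\<dots> = (real k + 1) * r^2 / d + u^2 * c * v / d - 2 * S1 * u * r / d + u^2 * (c * S2 - S1^2) / d^2"
    unfolding EQ v_def S1_def[symmetric] S2_def[symmetric]
    apply (rule var_id)
    using d0 c0 k0 assms unfolding a_def' b_def' u_def S1_def c_def d_def by auto
  also have "\<dots> \<le> (real k + 1) * r^2 / d + u^2 * c * (1/4) / d - 0 + u^2 * (c * S2) / d^2"
  proof -
    have "u^2 * c * v / d \<le> u^2 * c * (1/4) / d"
      using v4 u0 c0 d0 by (intro divide_right_mono mult_left_mono) auto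
    moreover have "2 * S1 * u * r / d \<ge> 0" using S10 u0 r d0 by simp
    moreover have "u^2 * (c * S2 - S1^2) / d^2 \<le> u^2 * (c * S2) / d^2"
      using u0 d0 by (intro divide_right_mono mult_left_mono) auto
    ultimately show ?thesis by linarith
  qed
  also have "\<dots> = (real k + 1) / (exp \<epsilon> - 1) *
               (r^2 + rmax^2 / (4 * real k^2)
                + (2 * real k + 1) * (exp \<epsilon> + real k) * rmax^2
                  / (6 * real k * (exp \<epsilon> - 1)))
             + rmax^2 / (4 * real k^2)"
    unfolding e_def[symmetric] c_def[symmetric] d_def[symmetric]
    apply (rule rhs_id)
    using d0 k0 unfolding u_def S2_def c_def d_def by auto
  finally show "measure_pmf.expectation (ScalarDP r \<epsilon> k rmax) (\<lambda>z. (z - r)^2)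
           \<le> (real k + 1) / (exp \<epsilon> - 1) *
               (r^2 + rmax^2 / (4 * real k^2)
                + (2 * real k + 1) * (exp \<epsilon> + real k) * rmax^2
                  / (6 * real k * (exp \<epsilon> - 1)))
             + rmax^2 / (4 * real k^2)" .
qed

end
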